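(* Let $p,p',p''\geq 5$ be three distinct primes. Then the set of integers $x$ such that for each $q\in\{p,p',p''\}$ there is an odd integer $k_q$ with $x=k_qq+4N(q/6)$ or $x=k_qq-4N(q/6)$ (the triple non-ranks of $p,p',p''$) is the union of exactly $2^3=8$ pairwise distinct arithmetic progressions (residue classes) with common difference $2pp'p''$.
   Context: $N(x)$ denotes the integer nearest to the real number $x$. *)

theory Defs
  imports Complex_Main "HOL-Computational_Algebra.Primes" "HOL-Number_Theory.Cong"
begin

(* N(x): the integer nearest to the real number x (ties rounded up; ties never
   occur for x = q/6 with q a prime >= 5). *)
definition nearest_int :: "real \<Rightarrow> int" where
  "nearest_int x = round x"

definition non_rank :: "int \<Rightarrow> int \<Rightarrow> bool" where
  "non_rank q x \<longleftrightarrow> (\<exists>k::int. odd k \<and>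
      (x = k * q + 4 * nearest_int (real_of_int q / 6) \<or>
       x = k * q - 4 * nearest_int (real_of_int q / 6)))"

end

theory Submission
  imports Defs
begin

lemma c_bounds:
  fixes q :: int
  assumes "prime q" "q \<ge> 5"
  shows "0 < nearest_int (real_of_int q / 6) \<and> nearest_int (real_of_int q / 6) < q"
proof -
  let ?c = "nearest_int (real_of_int q / 6)"
  have a: "real_of_int ?c \<ge> real_of_int q / 6 - 1/2" unfolding nearest_int_def by (rule of_int_round_ge)
  have b: "real_of_int ?c \<le> real_of_int q / 6 + 1/2" unfolding nearest_int_def by (rule of_int_round_le)
  have q5: "real_of_int q \<ge> 5" using assms(2) by simp
  have "real_of_int ?c > 0" using a q5 by linarith
  moreover have "real_of_int ?c < real_of_int q" using b q5 by linarith
  ultimately show ?thesis by simp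
qed

lemma not_cong_neg:
  fixes q :: int
  assumes "prime q" "q \<ge> 5"
  shows "\<not> [4 * nearest_int (real_of_int q / 6) = - (4 * nearest_int (real_of_int q / 6))] (mod q)"
proof
  let ?c = "nearest_int (real_of_int q / 6)"
  assume "[4 * ?c = - (4 * ?c)] (mod q)"
  hence "q dvd 2^3 * ?c" by (simp add: cong_iff_dvd_diff)
  hence "q dvd 2^3 \<or> q dvd ?c" using assms(1) prime_dvd_mult_iff by blast
  moreover have "\<not> q dvd ?c" using c_bounds[OF assms] zdvd_imp_le by fastforce
  moreover have "\<not> q dvd 2^3"
  proof
    assume "q dvd 2^3"
    hence "q dvd 2" using assms(1) prime_dvd_power by blast
    hence "q \<le> 2" by (simp add: zdvd_imp_le)
    thus False using assms by simp
  qed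
  ultimately show False by blast
qed

lemma nr_iff:
  fixes q x :: int
  assumes "prime q" "q \<ge> 5"
  shows "non_rank q x \<longleftrightarrow> odd x \<and> ([x = 4 * nearest_int (real_of_int q / 6)] (mod q)
           \<or> [x = - (4 * nearest_int (real_of_int q / 6))] (mod q))"
proof -
  define c where "c = nearest_int (real_of_int q / 6)"
  have oq: "odd q" using prime_odd_int assms by simp
  have "non_rank q x \<longleftrightarrow> (\<exists>k. odd k \<and> (x = k*q + 4*c \<or> x = k*q - 4*c))"
    unfolding non_rank_def c_def by simp
  also have "\<dots> \<longleftrightarrow> odd x \<and> ([x = 4*c] (mod q) \<or> [x = -(4*c)] (mod q))"
  proof
    assume "\<exists>k. odd k \<and> (x = k*q + 4*c \<or> x = k*q - 4*c)"
    then obtain k where k: "odd k" "x = k*q + 4*c \<or> x = k*q - 4*c" by blast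
    thus "odd x \<and> ([x = 4*c] (mod q) \<or> [x = -(4*c)] (mod q))"
      using oq by (auto simp: cong_iff_dvd_diff)
  next
    assume h: "odd x \<and> ([x = 4*c] (mod q) \<or> [x = -(4*c)] (mod q))"
    hence "q dvd x - 4*c \<or> q dvd x + 4*c" by (auto simp: cong_iff_dvd_diff)
    then obtain k where k: "x - 4*c = q*k \<or> x + 4*c = q*k" by (auto elim!: dvdE)
    have "odd (x - 4*c)" "odd (x + 4*c)" using h by auto
    hence "odd (q*k)" using k by metis
    hence "odd k" by simp
    thus "\<exists>k. odd k \<and> (x = k*q + 4*c \<or> x = k*q - 4*c)"
      using k by (intro exI[of _ k]) (auto simp: algebra_simps)
  qed
  finally show ?thesis unfolding c_def .
qed

lemma comp1:
  fixes a b e q :: int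
  assumes "(if [a=e] (mod q) then 1 else -1) = (if [b=e] (mod q) then 1 else (-1::int))"
    and "[a=e] (mod q) \<or> [a = -e] (mod q)" and "[b=e] (mod q) \<or> [b = -e] (mod q)"
  shows "[a = b] (mod q)"
  using assms by (auto split: if_splits intro: cong_trans cong_sym)

lemma comp2:
  fixes a s e q :: int
  assumes "\<not> [e = -e] (mod q)" "s \<in> {-1,1}" "[a = s*e] (mod q)"
  shows "(if [a=e] (mod q) then 1 else -1) = s \<and> ([a=e] (mod q) \<or> [a = -e] (mod q))"
proof (cases "s = 1")
  case True thus ?thesis using assms by auto
next
  case False
  hence s: "s = -1" using assms(2) by auto
  hence "[a = -e] (mod q)" using assms(3) by simp
  moreover have "\<not> [a = e] (mod q)"
  proof
    assume "[a = e] (mod q)"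
    hence "[e = -e] (mod q)" using \<open>[a = -e] (mod q)\<close> by (meson cong_sym cong_trans)
    thus False using assms(1) by simp
  qed
  ultimately show ?thesis using s by auto
qed

lemma odd_cong:
  fixes x y :: int
  assumes "[x = y] (mod 2)"
  shows "odd x \<longleftrightarrow> odd y"
  using assms unfolding cong_def by (simp add: odd_iff_mod_2_eq_one)

lemma odd_cong2:
  fixes x y :: int
  assumes "odd x" "odd y"
  shows "[x = y] (mod 2)"
  using assms unfolding cong_def by (simp add: odd_iff_mod_2_eq_one)

lemma cong_div_iff:
  fixes x y z d M :: int
  assumes "[x = y] (mod M)" "d dvd M"
  shows "[x = z] (mod d) \<longleftrightarrow> [y = z] (mod d)"
proof -
  have "[x = y] (mod d)" using assms cong_dvd_modulus by blast
  thus ?thesis by (meson cong_sym cong_trans)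
qed

lemma cong_down:
  fixes x y z d M :: int
  assumes "[x = y] (mod M)" "d dvd M" "[y = z] (mod d)"
  shows "[x = z] (mod d)"
  using assms cong_div_iff by blast

theorem theorem3p11:
  fixes p p' p'' :: int
  assumes "prime p" "prime p'" "prime p''"
    and "p \<ge> 5" "p' \<ge> 5" "p'' \<ge> 5"
    and "p \<noteq> p'" "p \<noteq> p''" "p' \<noteq> p''"
  shows "\<exists>A :: int set. A \<subseteq> {0..<2*p*p'*p''} \<and> card A = 8 \<and>
           {x::int. \<forall>q\<in>{p, p', p''}. non_rank q x}
             = {x. \<exists>a\<in>A. [x = a] (mod (2*p*p'*p''))}"
proof -
  define e where "e = 4 * nearest_int (real_of_int p / 6)"
  define e' where "e' = 4 * nearest_int (real_of_int p' / 6)"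
  define e'' where "e'' = 4 * nearest_int (real_of_int p'' / 6)"
  define M where "M = 2*p*p'*p''"
  define P where "P x \<longleftrightarrow> odd x \<and> ([x = e] (mod p) \<or> [x = -e] (mod p))
      \<and> ([x = e'] (mod p') \<or> [x = -e'] (mod p')) \<and> ([x = e''] (mod p'') \<or> [x = -e''] (mod p''))" for x
  have M0: "M > 0" unfolding M_def using assms(4,5,6) by simp
  have LHS: "{x::int. \<forall>q\<in>{p, p', p''}. non_rank q x} = {x. P x}"
    by (simp add: nr_iff[OF assms(1,4)] nr_iff[OF assms(2,5)] nr_iff[OF assms(3,6)]
        P_def e_def e'_def e''_def; blast)
  have tr: "P x \<longleftrightarrow> P y" if "[x = y] (mod M)" for x y
  proof -
    have d: "2 dvd M" "p dvd M" "p' dvd M" "p'' dvd M" unfolding M_def by auto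
    have "[x = y] (mod 2)" using that d(1) cong_dvd_modulus by blast
    hence "odd x \<longleftrightarrow> odd y" by (rule odd_cong)
    thus ?thesis unfolding P_def by (simp only: cong_div_iff[OF that d(2)] cong_div_iff[OF that d(3)]
        cong_div_iff[OF that d(4)])
  qed
  define A where "A = {a \<in> {0..<M}. P a}"
  have eq: "{x. P x} = {x. \<exists>a\<in>A. [x = a] (mod M)}"
  proof (intro set_eqI iffI; simp)
    fix x assume "P x"
    have c: "[x = x mod M] (mod M)" by (simp add: cong_def)
    hence "P (x mod M)" using tr \<open>P x\<close> by blast
    moreover have "x mod M \<in> {0..<M}" using M0 by simp
    ultimately show "\<exists>a\<in>A. [x = a] (mod M)" using c unfolding A_def by blast
  next
    fix x assume "\<exists>a\<in>A. [x = a] (mod M)"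
    then obtain a where "a \<in> A" "[x = a] (mod M)" by blast
    thus "P x" using tr unfolding A_def by blast
  qed
  define g where "g a = ((if [a=e] (mod p) then 1 else (-1::int)),
       (if [a=e'] (mod p') then 1 else (-1::int)), (if [a=e''] (mod p'') then 1 else (-1::int)))" for a
  define S where "S = ({-1,1} \<times> {-1,1} \<times> {-1,1} :: (int \<times> int \<times> int) set)"
  have cS: "card S = 8" unfolding S_def by (simp add: card_cartesian_product)
  have cop1: "coprime 2 p"
    using prime_imp_coprime[OF assms(1), of 2] assms(4) zdvd_imp_le[of p 2]
    by (auto simp: coprime_commute)
  have cop2: "coprime (2*p) p'"
  proof -
    have "coprime p' 2" using prime_imp_coprime[OF assms(2), of 2] assms(5) zdvd_imp_le[of p' 2] by auto
    moreover have "coprime p' p" using primes_coprime assms by blast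
    ultimately show ?thesis by (simp add: coprime_commute)
  qed
  have cop3: "coprime (2*p*p') p''"
  proof -
    have "coprime p'' 2" using prime_imp_coprime[OF assms(3), of 2] assms(6) zdvd_imp_le[of p'' 2] by auto
    moreover have "coprime p'' p" using primes_coprime assms by blast
    moreover have "coprime p'' p'" using primes_coprime assms by blast
    ultimately show ?thesis by (simp add: coprime_commute)
  qed
  have nc: "\<not> [e = -e] (mod p)" "\<not> [e' = -e'] (mod p')" "\<not> [e'' = -e''] (mod p'')"
    unfolding e_def e'_def e''_def using not_cong_neg[OF assms(1,4)] not_cong_neg[OF assms(2,5)]
      not_cong_neg[OF assms(3,6)] by simp_all
  have inj: "inj_on g A"
  proof (rule inj_onI)
    fix a b assume ab: "a \<in> A" "b \<in> A" "g a = g b"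
    have Pa: "P a" and Pb: "P b" using ab unfolding A_def by auto
    have "[a = b] (mod 2)" using Pa Pb odd_cong2 unfolding P_def by blast
    moreover have "[a = b] (mod p)" 
    proof (rule comp1[of a e p b])
      show "(if [a=e] (mod p) then 1 else -1) = (if [b=e] (mod p) then 1 else (-1::int))"
        using ab(3) unfolding g_def by simp
      show "[a=e] (mod p) \<or> [a = -e] (mod p)" using Pa unfolding P_def by blast
      show "[b=e] (mod p) \<or> [b = -e] (mod p)" using Pb unfolding P_def by blast
    qed
    ultimately have "[a = b] (mod 2*p)" using coprime_cong_mult[OF _ _ cop1] by blast
    moreover have "[a = b] (mod p')" 
    proof (rule comp1[of a e' p' b])
      show "(if [a=e'] (mod p') then 1 else -1) = (if [b=e'] (mod p') then 1 else (-1::int))"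
        using ab(3) unfolding g_def by simp
      show "[a=e'] (mod p') \<or> [a = -e'] (mod p')" using Pa unfolding P_def by blast
      show "[b=e'] (mod p') \<or> [b = -e'] (mod p')" using Pb unfolding P_def by blast
    qed
    ultimately have "[a = b] (mod 2*p*p')" using coprime_cong_mult[OF _ _ cop2] by blast
    moreover have "[a = b] (mod p'')" 
    proof (rule comp1[of a e'' p'' b])
      show "(if [a=e''] (mod p'') then 1 else -1) = (if [b=e''] (mod p'') then 1 else (-1::int))"
        using ab(3) unfolding g_def by simp
      show "[a=e''] (mod p'') \<or> [a = -e''] (mod p'')" using Pa unfolding P_def by blast
      show "[b=e''] (mod p'') \<or> [b = -e''] (mod p'')" using Pb unfolding P_def by blast
    qed
    ultimately have "[a = b] (mod M)" unfolding M_def using coprime_cong_mult[OF _ _ cop3] by blast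
    hence "a mod M = b mod M" unfolding cong_def .
    moreover have "a mod M = a" "b mod M = b" using ab unfolding A_def by auto
    ultimately show "a = b" by simp
  qed
  have img: "g ` A = S"
  proof
    show "g ` A \<subseteq> S"
    proof (rule image_subsetI)
      fix a show "g a \<in> S" unfolding g_def S_def by simp
    qed
  next
    show "S \<subseteq> g ` A"
    proof
      fix t assume "t \<in> S"
      obtain s1 s2 s3 where t0: "t = (s1,s2,s3)" by (cases t) blast
      have t: "t = (s1,s2,s3)" "s1 \<in> {-1,1}" "s2 \<in> {-1,1}" "s3 \<in> {-1,1}"
        using \<open>t \<in> S\<close> t0 unfolding S_def by (simp_all only: mem_Times_iff fst_conv snd_conv)
      obtain y1 where y1: "[y1 = 1] (mod 2)" "[y1 = s1*e] (mod p)"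
        using binary_chinese_remainder_int[OF cop1] by blast
      obtain y2 where y2: "[y2 = y1] (mod 2*p)" "[y2 = s2*e'] (mod p')"
        using binary_chinese_remainder_int[OF cop2] by blast
      obtain y3 where y3: "[y3 = y2] (mod 2*p*p')" "[y3 = s3*e''] (mod p'')"
        using binary_chinese_remainder_int[OF cop3] by blast
      define a where "a = y3 mod M"
      have aM: "[a = y3] (mod M)" unfolding a_def by (simp add: cong_def)
      have a3: "[a = y2] (mod 2*p*p')" using cong_down[OF aM _ y3(1)] unfolding M_def by simp
      have a3': "[a = s3*e''] (mod p'')" using cong_down[OF aM _ y3(2)] unfolding M_def by simp
      have a2: "[a = y1] (mod 2*p)" using cong_down[OF a3 _ y2(1)] by simp
      have a2': "[a = s2*e'] (mod p')" using cong_down[OF a3 _ y2(2)] by simp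
      have a1: "[a = 1] (mod 2)" using cong_down[OF a2 _ y1(1)] by simp
      have a1': "[a = s1*e] (mod p)" using cong_down[OF a2 _ y1(2)] by simp
      note r1 = comp2[OF nc(1) t(2) a1'] and r2 = comp2[OF nc(2) t(3) a2']
        and r3 = comp2[OF nc(3) t(4) a3']
      have "odd a" using odd_cong[OF a1] by simp
      hence "P a" unfolding P_def using r1 r2 r3 by (simp only: simp_thms)
      moreover have "a \<in> {0..<M}" unfolding a_def using M0 by simp
      ultimately have "a \<in> A" unfolding A_def by blast
      moreover have "g a = t" unfolding g_def t(1) using r1 r2 r3 by (simp only: prod.inject simp_thms)
      ultimately show "t \<in> g ` A" by blast
    qed
  qed
  have "card A = 8" using bij_betw_same_card[of g A S] inj img cS unfolding bij_betw_def by simp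
  moreover have "A \<subseteq> {0..<M}" unfolding A_def by blast
  ultimately have "A \<subseteq> {0..<M} \<and> card A = 8 \<and>
      {x::int. \<forall>q\<in>{p, p', p''}. non_rank q x} = {x. \<exists>a\<in>A. [x = a] (mod M)}"
    using LHS eq by simp
  thus ?thesis unfolding M_def by (rule exI[of _ A])
qed

end
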